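(* There is an absolute constant $C$ such that for every $n$, every $b\in\mathbb R$, every $w\in\mathbb R^n$ and every $\epsilon>0$, the budget-additive function $f(x)=\min(b,\sum_{i=1}^nw_ix_i)$ on $\{0,1\}^n$ satisfies $R^{lin}_{\epsilon\text{-approx}}(f)\le C\min\left(\lceil\|w\|_1^2/\epsilon\rceil,\ n\right)$.
   Context: For $S\subseteq[n]$, $\chi_S(x)=\sum_{i\in S}x_i\pmod2$. Approximate randomized $\mathbb F_2$-sketch complexity: $R^{lin}_{\epsilon\text{-approx}}(f)$ is the smallest integer $k$ such that there exist a probability distribution over $k$-tuples of subsets $\mathbf S_1,\dots,\mathbf S_k\subseteq[n]$ and $g\colon\mathbb F_2^k\to\mathbb R$ with $\mathbb E_{\mathbf S_1,\dots,\mathbf S_k}[(g(\chi_{\mathbf S_1}(x),\dots,\chi_{\mathbf S_k}(x))-f(x))^2]\le\epsilon$ for every $x\in\mathbb F_2^n$. $\|w\|_1=\sum_i|w_i|$. *)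

theory Defs
  imports "HOL-Probability.Probability"
begin

text \<open>Points of F_2^n are boolean lists of length n (True = 1); subsets S of [n] are
  subsets of {..<n}.  chi S x is the parity of the coordinates of x indexed by S.\<close>

definition chi :: "nat set \<Rightarrow> bool list \<Rightarrow> bool" where
  "chi S x = odd (card {i \<in> S. x ! i})"

definition approx_sketch :: "nat \<Rightarrow> (bool list \<Rightarrow> real) \<Rightarrow> real \<Rightarrow> nat \<Rightarrow> bool" where
  "approx_sketch n f eps k \<longleftrightarrow>
     (\<exists>(D :: nat set list pmf) (g :: bool list \<Rightarrow> real).
        (\<forall>L \<in> set_pmf D. length L = k \<and> (\<forall>S \<in> set L. S \<subseteq> {..<n})) \<and>
        (\<forall>x. length x = n \<longrightarrow>
             measure_pmf.expectation D (\<lambda>L. (g (map (\<lambda>S. chi S x) L) - f x)^2) \<le> eps))"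

definition R_lin_approx :: "nat \<Rightarrow> (bool list \<Rightarrow> real) \<Rightarrow> real \<Rightarrow> nat" where
  "R_lin_approx n f eps = (LEAST k. approx_sketch n f eps k)"

definition budget_additive :: "nat \<Rightarrow> real \<Rightarrow> (nat \<Rightarrow> real) \<Rightarrow> bool list \<Rightarrow> real" where
  "budget_additive n b w x = min b (\<Sum>i<n. w i * (if x ! i then 1 else 0))"

end

theory Submission imports Defs begin

fun Q :: "nat pmf \<Rightarrow> nat \<Rightarrow> nat list pmf" where
  "Q p 0 = return_pmf []"
| "Q p (Suc k) = bind_pmf p (\<lambda>i. map_pmf (Cons i) (Q p k))"

lemma Q_set: "L \<in> set_pmf (Q p k) \<Longrightarrow> length L = k \<and> set L \<subseteq> set_pmf p"
  by (induction k arbitrary: L) fastforce+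

lemma Q_fin: "finite (set_pmf p) \<Longrightarrow> finite (set_pmf (Q p k))"
  by (induction k) auto

lemma exp_fin: "finite (set_pmf p) \<Longrightarrow> measure_pmf.expectation p (f::_\<Rightarrow>real) = (\<Sum>a\<in>set_pmf p. pmf p a * f a)"
  by (subst integral_measure_pmf_real[where A="set_pmf p"]) (auto simp: mult.commute)

lemma Q_Suc_exp:
  assumes "finite (set_pmf p)"
  shows "measure_pmf.expectation (Q p (Suc k)) (F::_\<Rightarrow>real) =
     measure_pmf.expectation p (\<lambda>a. measure_pmf.expectation (Q p k) (\<lambda>L. F (a#L)))"
proof -
  have "measure_pmf.expectation (Q p (Suc k)) F = (\<Sum>a\<in>set_pmf p. pmf p a *\<^sub>R measure_pmf.expectation (map_pmf (Cons a) (Q p k)) F)"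
    unfolding Q.simps using assms Q_fin[OF assms]
    by (intro pmf_expectation_bind) auto
  also have "\<dots> = measure_pmf.expectation p (\<lambda>a. measure_pmf.expectation (Q p k) (\<lambda>L. F (a#L)))"
    using exp_fin[OF assms] by simp
  finally show ?thesis .
qed

lemma Q_sum:
  assumes "finite (set_pmf p)"
  shows "measure_pmf.expectation (Q p k) (\<lambda>L. sum_list (map (h::nat\<Rightarrow>real) L)) = k * measure_pmf.expectation p h"
proof (induction k)
  case 0
  then show ?case by (subst integral_measure_pmf_real[where A="{[]}"]) auto
next
  case (Suc k)
  have I: "integrable (measure_pmf (Q p k)) (f::_\<Rightarrow>real)" for f
    by (rule integrable_measure_pmf_finite[OF Q_fin[OF assms]])
  have Ip: "integrable (measure_pmf p) (f::_\<Rightarrow>real)" for f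
    by (rule integrable_measure_pmf_finite[OF assms])
  have "measure_pmf.expectation (Q p (Suc k)) (\<lambda>L. sum_list (map h L))
     = measure_pmf.expectation p (\<lambda>a. h a + k * measure_pmf.expectation p h)"
    unfolding Q_Suc_exp[OF assms] using Suc I by simp
  also have "\<dots> = measure_pmf.expectation p h + k * measure_pmf.expectation p h"
    using Ip by simp
  finally show ?case by (simp add: algebra_simps)
qed

lemma Q_sq:
  assumes "finite (set_pmf p)" and z: "measure_pmf.expectation p h = 0"
  shows "measure_pmf.expectation (Q p k) (\<lambda>L. (sum_list (map (h::nat\<Rightarrow>real) L))^2) = k * measure_pmf.expectation p (\<lambda>i. (h i)^2)"
proof (induction k)
  case 0
  then show ?case by (subst integral_measure_pmf_real[where A="{[]}"]) auto
next
  case (Suc k)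
  have I: "integrable (measure_pmf (Q p k)) (f::_\<Rightarrow>real)" for f
    by (rule integrable_measure_pmf_finite[OF Q_fin[OF assms(1)]])
  have Ip: "integrable (measure_pmf p) (f::_\<Rightarrow>real)" for f
    by (rule integrable_measure_pmf_finite[OF assms(1)])
  have e: "(h a + sum_list (map h L))^2 = (h a)^2 + 2 * h a * sum_list (map h L) + (sum_list (map h L))^2" for a L
    by (simp add: power2_eq_square algebra_simps)
  have "measure_pmf.expectation (Q p (Suc k)) (\<lambda>L. (sum_list (map h L))^2)
     = measure_pmf.expectation p (\<lambda>a. (h a)^2 + 2 * h a * (k * measure_pmf.expectation p h) + k * measure_pmf.expectation p (\<lambda>i. (h i)^2))"
    unfolding Q_Suc_exp[OF assms(1)] using Suc I Q_sum[OF assms(1), of k h]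
    by (simp add: e)
  also have "\<dots> = measure_pmf.expectation p (\<lambda>i. (h i)^2) + k * measure_pmf.expectation p (\<lambda>i. (h i)^2)"
    using Ip z by simp
  finally show ?case by (simp add: algebra_simps)
qed


lemma chi_single: "chi {i} x = x ! i"
proof -
  have "{j\<in>{i}. x ! j} = (if x ! i then {i} else {})" by auto
  then show ?thesis unfolding chi_def by simp
qed
lemma chi_empty: "chi {} x = False"
  unfolding chi_def by auto

fun dec :: "bool list \<Rightarrow> real" where
  "dec (a # c # r) = (if a then 1 else 0) - (if c then 1 else 0) + dec r"
| "dec _ = 0"

definition enc :: "(nat \<Rightarrow> real) \<Rightarrow> nat list \<Rightarrow> nat set list" where
  "enc w L = concat (map (\<lambda>i. if 0 \<le> w i then [{i},{}] else [{},{i}]) L)"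

lemma enc_len: "length (enc w L) = 2 * length L"
  unfolding enc_def by (induction L) auto

lemma enc_set: "S \<in> set (enc w L) \<Longrightarrow> S \<subseteq> set L"
  unfolding enc_def by (induction L) (auto split: if_splits)

lemma dec_enc: "dec (map (\<lambda>S. chi S x) (enc w L)) =
   sum_list (map (\<lambda>i. (if 0 \<le> w i then 1 else -1) * (if x ! i then 1 else 0)) L)"
  unfolding enc_def by (induction L) (auto simp: chi_single chi_empty)

definition pw :: "nat \<Rightarrow> (nat \<Rightarrow> real) \<Rightarrow> nat pmf" where
  "pw n w = pmf_of_list (map (\<lambda>i. (i, \<bar>w i\<bar> / (\<Sum>j<n. \<bar>w j\<bar>))) [0..<n])"

lemma pw_wf:
  fixes w :: "nat \<Rightarrow> real"
  assumes "(\<Sum>j<n. \<bar>w j\<bar>) > 0"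
  shows "pmf_of_list_wf (map (\<lambda>i. (i, \<bar>w i\<bar> / (\<Sum>j<n. \<bar>w j\<bar>))) [0..<n])"
proof (rule pmf_of_list_wfI)
  show "sum_list (map snd (map (\<lambda>i. (i, \<bar>w i\<bar> / (\<Sum>j<n. \<bar>w j\<bar>))) [0..<n])) = 1"
  proof -
    have "(\<Sum>x<n. \<bar>w x\<bar> / (\<Sum>j<n. \<bar>w j\<bar>)) = (\<Sum>x<n. \<bar>w x\<bar>) / (\<Sum>j<n. \<bar>w j\<bar>)"
      by (rule sum_divide_distrib[symmetric])
    also have "\<dots> = 1" using assms by (metis divide_self less_irrefl)
    finally have eq: "(\<Sum>x<n. \<bar>w x\<bar> / (\<Sum>j<n. \<bar>w j\<bar>)) = 1" .
    have "sum_list (map snd (map (\<lambda>i. (i, \<bar>w i\<bar> / (\<Sum>j<n. \<bar>w j\<bar>))) [0..<n])) = (\<Sum>x<n. \<bar>w x\<bar> / (\<Sum>j<n. \<bar>w j\<bar>))"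
      by (simp only: map_map o_def snd_conv sum_list_distinct_conv_sum_set distinct_upt set_upt atLeast0LessThan)
    then show ?thesis using eq by simp
  qed
qed auto


lemma pw_pmf:
  fixes w :: "nat \<Rightarrow> real"
  assumes "(\<Sum>j<n. \<bar>w j\<bar>) > 0"
  shows "pmf (pw n w) i = (if i < n then \<bar>w i\<bar> / (\<Sum>j<n. \<bar>w j\<bar>) else 0)"
proof -
  have "filter (\<lambda>j. j = i) [0..<n] = (if i < n then [i] else [])"
    by (induction n) auto
  then show ?thesis
    unfolding pw_def pmf_pmf_of_list[OF pw_wf[OF assms]]
    by (simp add: filter_map o_def)
qed

lemma pw_set:
  fixes w :: "nat \<Rightarrow> real"
  assumes "(\<Sum>j<n. \<bar>w j\<bar>) > 0"
  shows "set_pmf (pw n w) \<subseteq> {..<n}"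
  using set_pmf_of_list[OF pw_wf[OF assms]] unfolding pw_def by auto

lemma pw_fin:
  fixes w :: "nat \<Rightarrow> real"
  assumes "(\<Sum>j<n. \<bar>w j\<bar>) > 0"
  shows "finite (set_pmf (pw n w))"
  using pw_set[OF assms] finite_subset by blast

lemma pw_exp:
  fixes w :: "nat \<Rightarrow> real"
  assumes "(\<Sum>j<n. \<bar>w j\<bar>) > 0"
  shows "measure_pmf.expectation (pw n w) f = (\<Sum>i<n. f i * (\<bar>w i\<bar> / (\<Sum>j<n. \<bar>w j\<bar>)))"
  using pw_set[OF assms]
  by (subst integral_measure_pmf_real[where A="{..<n}"]) (auto simp: pw_pmf[OF assms])


lemma sum_list_aff: "sum_list (map (\<lambda>i. c * f i - d) L) = c * sum_list (map f L) - real (length L) * (d::real)"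
  by (induction L) (auto simp: algebra_simps)

lemma min_sq: "(min b u - min b v)^2 \<le> ((u::real) - v)^2"
proof -
  have "\<bar>min b u - min b v\<bar> \<le> \<bar>u - v\<bar>" by (auto simp: min_def)
  then show ?thesis by (simp add: abs_le_square_iff)
qed

lemma pw_moments:
  fixes w :: "nat \<Rightarrow> real" and x :: "bool list" and n :: nat
  defines "W \<equiv> (\<Sum>j<n. \<bar>w j\<bar>)"
  defines "\<mu> \<equiv> (\<Sum>i<n. w i * (if x ! i then 1 else 0))"
  defines "Y \<equiv> (\<lambda>i. W * ((if 0 \<le> w i then 1 else -1) * (if x ! i then 1 else 0)))"
  assumes W: "W > 0"
  shows "measure_pmf.expectation (pw n w) (\<lambda>i. Y i - \<mu>) = 0"
    and "measure_pmf.expectation (pw n w) (\<lambda>i. (Y i - \<mu>)^2) \<le> W^2"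
proof -
  define q where "q i = \<bar>w i\<bar> / W" for i
  have E: "measure_pmf.expectation (pw n w) f = (\<Sum>i<n. f i * q i)" for f
    using pw_exp[where n=n and w=w and f=f] W unfolding q_def W_def by simp
  have q1: "(\<Sum>i<n. q i) = 1"
  proof -
    have "(\<Sum>i<n. q i) = (\<Sum>i<n. \<bar>w i\<bar>) / W" unfolding q_def by (rule sum_divide_distrib[symmetric])
    then show ?thesis using W unfolding W_def by (metis divide_self less_irrefl)
  qed
  have q0: "q i \<ge> 0" for i unfolding q_def using W by simp
  have Yq: "Y i * q i = w i * (if x ! i then 1 else 0)" for i
    unfolding Y_def q_def using W by (auto simp: field_simps)
  have SY: "(\<Sum>i<n. Y i * q i) = \<mu>" unfolding \<mu>_def using Yq by simp
  have "(\<Sum>i<n. (Y i - \<mu>) * q i) = (\<Sum>i<n. Y i * q i) - \<mu> * (\<Sum>i<n. q i)"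
    by (simp add: algebra_simps sum_subtractf sum_distrib_left)
  then show "measure_pmf.expectation (pw n w) (\<lambda>i. Y i - \<mu>) = 0"
    unfolding E using SY q1 by simp
  have "(\<Sum>i<n. (Y i - \<mu>)^2 * q i) = (\<Sum>i<n. (Y i)^2 * q i) - 2 * \<mu> * (\<Sum>i<n. Y i * q i) + \<mu>^2 * (\<Sum>i<n. q i)"
    by (simp add: power2_eq_square algebra_simps sum_subtractf sum.distrib sum_distrib_left)
  also have "\<dots> = (\<Sum>i<n. (Y i)^2 * q i) - \<mu>^2" using SY q1 by (simp add: power2_eq_square)
  also have "\<dots> \<le> (\<Sum>i<n. (Y i)^2 * q i)" by simp
  also have "\<dots> \<le> (\<Sum>i<n. W^2 * q i)"
  proof (rule sum_mono)
    fix i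
    have "(Y i)^2 \<le> W^2" unfolding Y_def by (auto simp: power_mult_distrib)
    then show "(Y i)^2 * q i \<le> W^2 * q i" using q0[of i] by (rule mult_right_mono)
  qed
  also have "\<dots> = W^2" using q1 by (simp flip: sum_distrib_left)
  finally show "measure_pmf.expectation (pw n w) (\<lambda>i. (Y i - \<mu>)^2) \<le> W^2"
    unfolding E .
qed


lemma rand_sketch:
  fixes w :: "nat \<Rightarrow> real"
  assumes W: "(\<Sum>j<n. \<bar>w j\<bar>) > 0" and k: "k > 0"
    and keps: "(\<Sum>j<n. \<bar>w j\<bar>)^2 \<le> real k * eps"
  shows "approx_sketch n (budget_additive n b w) eps (2*k)"
proof -
  define W where "W = (\<Sum>j<n. \<bar>w j\<bar>)"
  define p where "p = pw n w"
  have fin: "finite (set_pmf p)" unfolding p_def using pw_fin[OF W] .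
  define D where "D = map_pmf (enc w) (Q p k)"
  define g where "g = (\<lambda>bits. min b (W / real k * dec bits))"
  show ?thesis unfolding approx_sketch_def
  proof (intro exI[of _ D] exI[of _ g] conjI ballI allI impI)
    fix L assume "L \<in> set_pmf D"
    then obtain L0 where L0: "L0 \<in> set_pmf (Q p k)" "L = enc w L0" unfolding D_def by auto
    show "length L = 2*k" using Q_set[OF L0(1)] L0(2) enc_len by simp
    fix S assume "S \<in> set L"
    then have "S \<subseteq> set L0" using L0(2) enc_set by blast
    also have "\<dots> \<subseteq> set_pmf p" using Q_set[OF L0(1)] by blast
    also have "\<dots> \<subseteq> {..<n}" unfolding p_def using pw_set[OF W] .
    finally show "S \<subseteq> {..<n}" .
  next
    fix x :: "bool list" assume "length x = n"
    define \<mu> where "\<mu> = (\<Sum>i<n. w i * (if x ! i then 1 else 0))"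
    define Y where "Y = (\<lambda>i. W * ((if 0 \<le> w i then 1 else -1) * (if x ! i then 1 else 0)))"
    have m1: "measure_pmf.expectation p (\<lambda>i. Y i - \<mu>) = 0"
      and m2: "measure_pmf.expectation p (\<lambda>i. (Y i - \<mu>)^2) \<le> W^2"
      using pw_moments[where w=w and n=n and x=x] W unfolding p_def Y_def \<mu>_def W_def by auto
    have fx: "budget_additive n b w x = min b \<mu>" unfolding budget_additive_def \<mu>_def ..
    have pt: "(g (map (\<lambda>S. chi S x) (enc w L0)) - min b \<mu>)^2 \<le> (sum_list (map (\<lambda>i. Y i - \<mu>) L0))^2 / (real k)^2"
      if L0: "L0 \<in> set_pmf (Q p k)" for L0
    proof -
      have len: "length L0 = k" using Q_set[OF L0] by simp
      define T where "T = sum_list (map (\<lambda>i. (if 0 \<le> w i then 1 else -1) * (if x ! i then 1 else (0::real))) L0)"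
      have gv: "g (map (\<lambda>S. chi S x) (enc w L0)) = min b (W / real k * T)"
        unfolding g_def T_def dec_enc ..
      have sv: "sum_list (map (\<lambda>i. Y i - \<mu>) L0) = W * T - real k * \<mu>"
        unfolding Y_def T_def using sum_list_aff[of W _ \<mu> L0] len by simp
      have "W / real k * T - \<mu> = (W * T - real k * \<mu>) / real k" using k by (simp add: field_simps)
      then have "(W / real k * T - \<mu>)^2 = (sum_list (map (\<lambda>i. Y i - \<mu>) L0))^2 / (real k)^2"
        using sv by (simp add: power_divide)
      then show ?thesis using gv min_sq[of b "W / real k * T" \<mu>] by simp
    qed
    have I: "integrable (measure_pmf (Q p k)) (f::_\<Rightarrow>real)" for f
      by (rule integrable_measure_pmf_finite[OF Q_fin[OF fin]])
    have "measure_pmf.expectation D (\<lambda>L. (g (map (\<lambda>S. chi S x) L) - budget_additive n b w x)^2)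
        = measure_pmf.expectation (Q p k) (\<lambda>L0. (g (map (\<lambda>S. chi S x) (enc w L0)) - min b \<mu>)^2)"
      unfolding D_def fx by simp
    also have "\<dots> \<le> measure_pmf.expectation (Q p k) (\<lambda>L0. (sum_list (map (\<lambda>i. Y i - \<mu>) L0))^2 / (real k)^2)"
      by (rule integral_mono_AE[OF I I]) (auto simp: AE_measure_pmf_iff intro!: pt)
    also have "\<dots> = measure_pmf.expectation (Q p k) (\<lambda>L0. (sum_list (map (\<lambda>i. Y i - \<mu>) L0))^2) / (real k)^2"
      by simp
    also have "\<dots> = real k * measure_pmf.expectation p (\<lambda>i. (Y i - \<mu>)^2) / (real k)^2"
      using Q_sq[OF fin m1, of k] by simp
    also have "\<dots> \<le> real k * W^2 / (real k)^2"
      using m2 by (intro divide_right_mono mult_left_mono) auto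
    also have "\<dots> = W^2 / real k" using k by (simp add: power2_eq_square)
    also have "\<dots> \<le> eps" using keps k unfolding W_def by (simp add: divide_le_eq mult.commute)
    finally show "measure_pmf.expectation D (\<lambda>L. (g (map (\<lambda>S. chi S x) L) - budget_additive n b w x)^2) \<le> eps" .
  qed
qed


lemma det_sketch:
  assumes "eps \<ge> 0"
  shows "approx_sketch n (budget_additive n b w) eps n"
proof -
  define D where "D = return_pmf (map (\<lambda>i. {i}) [0..<n])"
  define g where "g = (\<lambda>bits. min b (\<Sum>i<n. w i * (if bits ! i then 1 else (0::real))))"
  show ?thesis unfolding approx_sketch_def
  proof (intro exI[of _ D] exI[of _ g] conjI ballI allI impI)
    fix L assume "L \<in> set_pmf D"
    then show "length L = n" "\<And>S. S \<in> set L \<Longrightarrow> S \<subseteq> {..<n}" unfolding D_def by auto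
  next
    fix x :: "bool list" assume "length x = n"
    have "g (map (\<lambda>S. chi S x) (map (\<lambda>i. {i}) [0..<n])) = budget_additive n b w x"
      unfolding g_def budget_additive_def by (auto simp: chi_single intro!: sum.cong arg_cong[where f="min b"])
    then show "measure_pmf.expectation D (\<lambda>L. (g (map (\<lambda>S. chi S x) L) - budget_additive n b w x)^2) \<le> eps"
      unfolding D_def using assms by (subst integral_measure_pmf_real[where A="{map (\<lambda>i. {i}) [0..<n]}"]) auto
  qed
qed

lemma zero_sketch:
  fixes w :: "nat \<Rightarrow> real"
  assumes "(\<Sum>j<n. \<bar>w j\<bar>) \<le> 0" "eps \<ge> 0"
  shows "approx_sketch n (budget_additive n b w) eps 0"
proof -
  have w0: "w i = 0" if "i < n" for i
  proof -
    have "(\<Sum>j<n. \<bar>w j\<bar>) = 0" using assms(1) by (simp add: antisym sum_nonneg)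
    then show ?thesis using that by (simp add: sum_nonneg_eq_0_iff)
  qed
  have fx: "budget_additive n b w x = min b 0" for x
    unfolding budget_additive_def using w0 by simp
  show ?thesis unfolding approx_sketch_def
    by (intro exI[of _ "return_pmf []"] exI[of _ "\<lambda>_. min b 0"])
       (use assms(2) in \<open>auto simp: fx intro!: order.trans[OF eq_refl] 
          integral_measure_pmf_real[where A="{[]}", THEN trans]\<close>)
qed

theorem mainTheorem16:
  shows "\<exists>C::real. \<forall>(n::nat) (b::real) (w::nat \<Rightarrow> real) (eps::real). eps > 0 \<longrightarrow>
           real (R_lin_approx n (budget_additive n b w) eps)
             \<le> C * min (real_of_int \<lceil>(\<Sum>i<n. \<bar>w i\<bar>)^2 / eps\<rceil>) (real n)"
proof (intro exI[of _ 2] allI impI)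
  fix n :: nat and b :: real and w :: "nat \<Rightarrow> real" and eps :: real
  assume e: "eps > 0"
  define W where "W = (\<Sum>i<n. \<bar>w i\<bar>)"
  define m where "m = \<lceil>W^2 / eps\<rceil>"
  have m0: "m \<ge> 0" unfolding m_def using e by (simp add: less_le_trans[of "-1" 0])
  let ?R = "R_lin_approx n (budget_additive n b w) eps"
  have eqm: "real_of_int \<lceil>(\<Sum>i<n. \<bar>w i\<bar>)^2 / eps\<rceil> = real_of_int m" by (simp add: m_def W_def)
  show "real ?R \<le> 2 * min (real_of_int \<lceil>(\<Sum>i<n. \<bar>w i\<bar>)^2 / eps\<rceil>) (real n)"
  proof (cases "real n \<le> real_of_int m")
    case True
    have "?R \<le> n" unfolding R_lin_approx_def by (rule Least_le, rule det_sketch) (use e in simp)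
    then show ?thesis using True eqm by simp
  next
    case False
    show ?thesis
    proof (cases "W \<le> 0")
      case True
      have "?R \<le> 0" unfolding R_lin_approx_def
        by (rule Least_le, rule zero_sketch) (use e True in \<open>auto simp: W_def\<close>)
      then show ?thesis using m0 eqm by simp
    next
      case Wp: False
      have "W^2 / eps > 0" using Wp e by simp
      then have mp: "m \<ge> 1" unfolding m_def by simp
      have "W^2 / eps \<le> real_of_int m" unfolding m_def by simp
      then have keps: "W^2 \<le> real (nat m) * eps" using e m0 by (simp add: divide_le_eq)
      have "?R \<le> 2 * nat m" unfolding R_lin_approx_def
        by (rule Least_le, rule rand_sketch) (use Wp keps mp in \<open>auto simp: W_def\<close>)
      then show ?thesis using False m0 eqm by simp
    qed
  qed
qed

end
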